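(* The representation $\rho$ in the following setting is reducible if and only if $w\ne2$. Setting: $q$ a root of unity with $n$ even and $q^4\ne1$ ($N=n/2$); $k\in\mathbb Z$, $w=-q^{4k+2}-q^{-4k-2}$; $V$ has basis $\{u_i:-N\le i\le N-1\}$, $u_N:=0$; $\lambda_i=q^{2i}+q^{-2i}$, and for $i\ne-N,0$: $s_i=\frac{q^{2i-2k}-q^{-2i+2k}}{q^{2i}-q^{-2i}}$, $s'_i=\frac{q^{2i+2}-q^{-2i-2}}{q^{2i}-q^{-2i}}s_i$, $\beta_i=\frac{q^{2k}-q^{-2k}}{(q^{2i}-q^{-2i})^3}$; $\rho$ is the representation of $\mathcal S_q(\Sigma_{1,1})$ with $\rho(\alpha_0)u_i=\lambda_iu_i$ ($-N\le i\le0$), $\rho(\alpha_0)u_i=\lambda_iu_i+u_{-i}$ ($0<i<N$), $\rho(\alpha_\infty)u_{-N}=(q^{2k}+q^{-2k})u_{-N+1}+(q^2-q^{-2})(q^{2k}-q^{-2k})u_{N-1}$, $\rho(\alpha_\infty)u_i=s_iu_{i+1}+s_{-i}u_{i-1}$ ($-N<i<0$), $\rho(\alpha_\infty)u_0=(q^{2k}+q^{-2k})u_{-1}-(q^2-q^{-2})(q^{2k}-q^{-2k})u_1$, $\rho(\alpha_\infty)u_i=\beta_iu_{-i-1}-\beta_iu_{-i+1}+s'_{-i}u_{i-1}+s'_iu_{i+1}$ ($0<i<N$).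
   Context: $\mathcal S_q(\Sigma_{1,1})$ is the Kauffman bracket skein algebra of the one-punctured torus, generated by the slope $0,1,\infty$ curves $\alpha_0,\alpha_1,\alpha_\infty$; for $q^4\ne1$ a representation is determined by the images of $\alpha_0,\alpha_\infty$. For $q$ a root of unity, $n=\mathrm{ord}(q^2)$, $N=\mathrm{ord}(q^4)$. (The formulas above are known to define a representation.) *)

theory Defs
  imports Complex_Main
begin

text \<open>Vectors of V are coordinate functions int => complex supported on {-N..N-1};
  the basis vector u_i is the indicator of i (so u_N = 0 automatically).\<close>

definition qp :: "complex \<Rightarrow> int \<Rightarrow> complex" where
  "qp q m = q powi m"

definition ordq2 :: "complex \<Rightarrow> nat" where
  "ordq2 q = (LEAST m. m > 0 \<and> (q^2)^m = 1)"

definition Vsp :: "int \<Rightarrow> (int \<Rightarrow> complex) set" where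
  "Vsp N = {v. \<forall>j. (j < -N \<or> j \<ge> N) \<longrightarrow> v j = 0}"

definition ub :: "int \<Rightarrow> int \<Rightarrow> (int \<Rightarrow> complex)" where
  "ub N i = (\<lambda>j. if j = i \<and> -N \<le> i \<and> i \<le> N - 1 then 1 else 0)"

definition lam :: "complex \<Rightarrow> int \<Rightarrow> complex" where
  "lam q i = qp q (2*i) + qp q (-2*i)"

definition sc :: "complex \<Rightarrow> int \<Rightarrow> int \<Rightarrow> complex" where
  "sc q k i = (qp q (2*i - 2*k) - qp q (-2*i + 2*k)) / (qp q (2*i) - qp q (-2*i))"

definition sc' :: "complex \<Rightarrow> int \<Rightarrow> int \<Rightarrow> complex" where
  "sc' q k i = (qp q (2*i + 2) - qp q (-2*i - 2)) / (qp q (2*i) - qp q (-2*i)) * sc q k i"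

definition bet :: "complex \<Rightarrow> int \<Rightarrow> int \<Rightarrow> complex" where
  "bet q k i = (qp q (2*k) - qp q (-2*k)) / (qp q (2*i) - qp q (-2*i))^3"

definition rho0_u :: "complex \<Rightarrow> int \<Rightarrow> int \<Rightarrow> (int \<Rightarrow> complex)" where
  "rho0_u q N i =
     (if -N \<le> i \<and> i \<le> 0 then (\<lambda>j. lam q i * ub N i j)
      else (\<lambda>j. lam q i * ub N i j + ub N (-i) j))"

definition rhoInf_u :: "complex \<Rightarrow> int \<Rightarrow> int \<Rightarrow> int \<Rightarrow> (int \<Rightarrow> complex)" where
  "rhoInf_u q k N i =
     (if i = -N then (\<lambda>j. (qp q (2*k) + qp q (-2*k)) * ub N (-N+1) j
            + (qp q 2 - qp q (-2)) * (qp q (2*k) - qp q (-2*k)) * ub N (N - 1) j)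
      else if -N < i \<and> i < 0 then (\<lambda>j. sc q k i * ub N (i+1) j + sc q k (-i) * ub N (i - 1) j)
      else if i = 0 then (\<lambda>j. (qp q (2*k) + qp q (-2*k)) * ub N (-1) j
            - (qp q 2 - qp q (-2)) * (qp q (2*k) - qp q (-2*k)) * ub N 1 j)
      else (\<lambda>j. bet q k i * ub N (-i-1) j - bet q k i * ub N (-i+1) j
            + sc' q k (-i) * ub N (i - 1) j + sc' q k i * ub N (i+1) j))"

definition linext :: "int \<Rightarrow> (int \<Rightarrow> (int \<Rightarrow> complex)) \<Rightarrow> (int \<Rightarrow> complex) \<Rightarrow> (int \<Rightarrow> complex)" where
  "linext N f v = (\<lambda>j. \<Sum>i\<in>{-N..N-1}. v i * f i j)"

definition rho0 :: "complex \<Rightarrow> int \<Rightarrow> (int \<Rightarrow> complex) \<Rightarrow> (int \<Rightarrow> complex)" where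
  "rho0 q N = linext N (rho0_u q N)"

definition rhoInf :: "complex \<Rightarrow> int \<Rightarrow> int \<Rightarrow> (int \<Rightarrow> complex) \<Rightarrow> (int \<Rightarrow> complex)" where
  "rhoInf q k N = linext N (rhoInf_u q k N)"

definition csubspace_of :: "int \<Rightarrow> (int \<Rightarrow> complex) set \<Rightarrow> bool" where
  "csubspace_of N W \<longleftrightarrow> W \<subseteq> Vsp N \<and> (\<lambda>_. 0) \<in> W
     \<and> (\<forall>v\<in>W. \<forall>w\<in>W. (\<lambda>j. v j + w j) \<in> W)
     \<and> (\<forall>c. \<forall>v\<in>W. (\<lambda>j. c * v j) \<in> W)"

text \<open>Reducible: there is a nonzero proper subspace invariant under rho(alpha_0) and
  rho(alpha_infinity) (these generate the image of the skein algebra for q^4 /= 1).\<close>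
definition reducible_rep :: "complex \<Rightarrow> int \<Rightarrow> int \<Rightarrow> bool" where
  "reducible_rep q k N \<longleftrightarrow> (\<exists>W. csubspace_of N W \<and> W \<noteq> {\<lambda>_. 0} \<and> W \<noteq> Vsp N
     \<and> (\<forall>v\<in>W. rho0 q N v \<in> W \<and> rhoInf q k N v \<in> W))"

end

theory Submission
  imports Defs
begin


lemma powi_eq1_iff:
  fixes z :: complex and n :: nat
  assumes n: "n > 0" "z ^ n = 1" and least: "\<And>m. 0 < m \<Longrightarrow> z ^ m = 1 \<Longrightarrow> n \<le> m"
  shows "z powi a = 1 \<longleftrightarrow> int n dvd a"
proof
  have z0: "z \<noteq> 0" using n by (metis power_0_left zero_neq_one gr0_implies_Suc power_Suc0_right power_eq_0_iff)
  assume h: "z powi a = 1"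
  define r where "r = a mod int n"
  have r: "0 \<le> r" "r < int n" using n by (auto simp: r_def)
  have "a = int n * (a div int n) + r" by (simp add: r_def)
  hence "z powi a = (z powi (int n)) powi (a div int n) * z powi r"
    using z0 by (metis power_int_add power_int_mult)
  also have "z powi (int n) = 1" using n by (simp add: power_int_of_nat)
  finally have "z powi r = 1" using h by simp
  hence zr: "z ^ nat r = 1" using r by (metis nonneg_int_cases nat_int power_int_of_nat)
  have "r = 0"
  proof (rule ccontr)
    assume "r \<noteq> 0"
    hence "0 < nat r" using r by simp
    from least[OF this zr] r show False by simp
  qed
  thus "int n dvd a" by (simp add: r_def dvd_eq_mod_eq_0)
next
  assume "int n dvd a"
  then obtain c where "a = int n * c" by blast
  have z0: "z \<noteq> 0" using n by (metis power_0_left zero_neq_one gr0_implies_Suc power_Suc0_right power_eq_0_iff)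
  have "z powi a = (z powi (int n)) powi c" using z0 by (simp add: \<open>a = _\<close> power_int_mult)
  also have "\<dots> = 1" using n by (simp add: power_int_of_nat)
  finally show "z powi a = 1" .
qed



lemma dvd_small: fixes N x :: int assumes "N dvd x" "-N < x" "x < N" shows "x = 0"
proof (rule ccontr)
  assume "x \<noteq> 0"
  hence "\<bar>N\<bar> \<le> \<bar>x\<bar>" using assms(1) by (simp add: dvd_imp_le_int)
  thus False using assms(2,3) by linarith
qed

locale rs =
  fixes q :: complex and k N :: int
  assumes q0: "q \<noteq> 0" and key: "\<And>a. qp q (2*a) = 1 \<longleftrightarrow> 2*N dvd a" and N2: "N \<ge> 2"
begin

lemma qp_add: "qp q (a + b) = qp q a * qp q b"
  using q0 by (simp add: qp_def power_int_add)

lemma qp_neg: "qp q (-a) * qp q a = 1"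
  using q0 by (simp add: qp_def power_int_minus field_simps)

lemma qp_nz: "qp q a \<noteq> 0" using q0 by (simp add: qp_def)

lemma diff0: "qp q (2*a) - qp q (-2*a) = 0 \<longleftrightarrow> N dvd a"
proof -
  have "qp q (2*a) - qp q (-2*a) = 0 \<longleftrightarrow> qp q (2*a) * qp q (2*a) = 1"
  proof
    assume "qp q (2*a) - qp q (-2*a) = 0"
    hence "qp q (2*a) = qp q (-(2*a))" by simp
    thus "qp q (2*a) * qp q (2*a) = 1" using qp_neg[of "2*a"] by simp
  next
    assume h: "qp q (2*a) * qp q (2*a) = 1"
    have "qp q (-(2*a)) = qp q (-(2*a)) * (qp q (2*a) * qp q (2*a))" using h by simp
    also have "\<dots> = qp q (2*a)" using qp_neg[of "2*a"] by (simp add: mult.assoc[symmetric])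
    finally show "qp q (2*a) - qp q (-2*a) = 0" by simp
  qed
  also have "qp q (2*a) * qp q (2*a) = qp q (2*(2*a))" using qp_add[of "2*a" "2*a"] by simp
  also have "\<dots> = 1 \<longleftrightarrow> 2*N dvd 2*a" by (rule key)
  also have "\<dots> \<longleftrightarrow> N dvd a" by simp
  finally show ?thesis .
qed

lemma diff0': "qp q (2*a - 2*b) - qp q (-2*a + 2*b) = 0 \<longleftrightarrow> N dvd (a - b)"
proof -
  have "2*a - 2*b = 2*(a-b)" "-2*a + 2*b = -2*(a-b)" by simp_all
  thus ?thesis using diff0[of "a-b"] by simp
qed

lemma sum0: "qp q (2*a) + qp q (-2*a) = 0 \<Longrightarrow> N dvd 2*a"
proof -
  assume "qp q (2*a) + qp q (-2*a) = 0"
  hence "qp q (-(2*a)) = - qp q (2*a)" by (simp add: add_eq_0_iff)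
  hence "qp q (2*a) * qp q (2*a) = -1" using qp_neg[of "2*a"] by (metis minus_equation_iff mult_minus_left)
  hence "qp q (2*(2*a)) = -1" using qp_add[of "2*a" "2*a"] by simp
  hence "qp q (2*(2*a)) * qp q (2*(2*a)) = 1" by simp
  hence "qp q (2*(4*a)) = 1" using qp_add[of "2*(2*a)" "2*(2*a)"] by simp
  hence "2*N dvd 4*a" using key by blast
  thus "N dvd 2*a" by (metis dvd_mult_cancel_left mult.assoc numeral_Bit0 mult_2 zero_neq_numeral)
qed

lemma lam_eq: "lam q a = lam q b \<Longrightarrow> 2*N dvd (a - b) \<or> 2*N dvd (a + b)"
proof -
  assume h: "lam q a = lam q b"
  define x where "x = qp q (2*a)"
  define y where "y = qp q (2*b)"
  have x': "qp q (-(2*a)) = 1/x" using qp_neg[of "2*a"] qp_nz unfolding x_def by (simp add: field_simps)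
  have y': "qp q (-(2*b)) = 1/y" using qp_neg[of "2*b"] qp_nz unfolding y_def by (simp add: field_simps)
  have xy0: "x \<noteq> 0" "y \<noteq> 0" using qp_nz by (auto simp: x_def y_def)
  from h have "x + 1/x = y + 1/y" by (simp add: lam_def x' y' x_def y_def)
  hence "(x - y) * (x*y - 1) = 0" using xy0 by (simp add: field_simps)
  hence "x = y \<or> x * y = 1" by auto
  thus ?thesis
  proof
    assume "x = y"
    hence "qp q (2*(a-b)) = 1" using qp_add[of "2*a" "-2*b"] qp_neg[of "2*b"]
      by (simp add: x_def y_def algebra_simps)
    thus ?thesis using key by blast
  next
    assume "x * y = 1"
    hence "qp q (2*(a+b)) = 1" using qp_add[of "2*a" "2*b"] by (simp add: x_def y_def algebra_simps)
    thus ?thesis using key by blast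
  qed
qed

end


lemma linext_ub: "-N \<le> i \<Longrightarrow> i \<le> N-1 \<Longrightarrow> linext N f (ub N i) = f i"
  unfolding linext_def ub_def
  apply (rule ext)
  apply (subst sum.cong[OF refl, where h="\<lambda>ia. if ia = i then f i j else 0" for j])
   apply auto
  done

lemma linext_comb: "linext N f (\<lambda>j. x j + c * y j) = (\<lambda>j. linext N f x j + c * linext N f y j)"
  unfolding linext_def
  by (rule ext) (simp add: distrib_right sum.distrib sum_distrib_left mult.assoc)

lemma rho0_u_alt: "-N \<le> i \<Longrightarrow> i \<le> N-1 \<Longrightarrow>
  rho0_u q N i j = (if j = i then lam q i else 0) + (if 0 < i \<and> j = -i then 1 else 0)"
  unfolding rho0_u_def ub_def by auto

lemma rho0_apply: "rho0 q N v j = (if -N \<le> j \<and> j \<le> N-1 then lam q j * v j else 0)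
    + (if -N < j \<and> j < 0 then v (-j) else 0)"
proof -
  have "rho0 q N v j = (\<Sum>i\<in>{-N..N-1}. (if j = i then v i * lam q i else 0) + (if i = -j then (if 0 < i then v i else 0) else 0))"
    unfolding rho0_def linext_def
    by (rule sum.cong) (auto simp: rho0_u_alt)
  also have "\<dots> = (if -N \<le> j \<and> j \<le> N-1 then lam q j * v j else 0)
    + (if -N < j \<and> j < 0 then v (-j) else 0)"
    by (simp add: sum.distrib cong: if_cong)
  finally show ?thesis .
qed



definition invsub :: "complex \<Rightarrow> int \<Rightarrow> int \<Rightarrow> (int \<Rightarrow> complex) set \<Rightarrow> bool" where
  "invsub q k N W \<longleftrightarrow> csubspace_of N W \<and> (\<forall>v\<in>W. rho0 q N v \<in> W \<and> rhoInf q k N v \<in> W)"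

lemma lam_neg: "lam q (-t) = lam q t" by (simp add: lam_def add.commute)

context fixes q k N W assumes W: "invsub q k N W"
begin

lemma W_Vsp: "v \<in> W \<Longrightarrow> v \<in> Vsp N" using W by (auto simp: invsub_def csubspace_of_def)
lemma W_zero: "(\<lambda>_. 0) \<in> W" using W by (auto simp: invsub_def csubspace_of_def)
lemma W_add: "x \<in> W \<Longrightarrow> y \<in> W \<Longrightarrow> (\<lambda>j. x j + y j) \<in> W"
  using W by (auto simp: invsub_def csubspace_of_def)
lemma W_scale: "x \<in> W \<Longrightarrow> (\<lambda>j. c * x j) \<in> W"
  using W by (auto simp: invsub_def csubspace_of_def)
lemma W_comb: "x \<in> W \<Longrightarrow> y \<in> W \<Longrightarrow> (\<lambda>j. x j + c * y j) \<in> W"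
  using W_add W_scale by blast
lemma W_rho0: "x \<in> W \<Longrightarrow> rho0 q N x \<in> W" using W by (auto simp: invsub_def)
lemma W_rhoInf: "x \<in> W \<Longrightarrow> rhoInf q k N x \<in> W" using W by (auto simp: invsub_def)
lemma W_T: "x \<in> W \<Longrightarrow> (\<lambda>j. rho0 q N x j - \<mu> * x j) \<in> W"
  using W_comb[of "rho0 q N x" x "-\<mu>"] W_rho0 by simp
lemma W_eq: "x \<in> W \<Longrightarrow> x = y \<Longrightarrow> y \<in> W" by simp
lemma W_unscale: "(\<lambda>j. c * x j) \<in> W \<Longrightarrow> c \<noteq> 0 \<Longrightarrow> x \<in> W"
  using W_scale[of "\<lambda>j. c * x j" "1/c"] by simp

lemma W_sum: "finite F \<Longrightarrow> (\<forall>i\<in>F. ub N i \<in> W) \<Longrightarrow> (\<lambda>j. \<Sum>i\<in>F. v i * ub N i j) \<in> W"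
proof (induction F rule: finite_induct)
  case empty then show ?case using W_zero by simp
next
  case (insert x F)
  have "(\<lambda>j. (\<Sum>i\<in>F. v i * ub N i j) + v x * ub N x j) \<in> W"
    using insert by (intro W_comb) auto
  thus ?case using insert by (simp add: add.commute)
qed

lemma W_full: "(\<forall>i. -N \<le> i \<and> i \<le> N-1 \<longrightarrow> ub N i \<in> W) \<Longrightarrow> W = Vsp N"
proof
  assume h: "\<forall>i. -N \<le> i \<and> i \<le> N-1 \<longrightarrow> ub N i \<in> W"
  show "Vsp N \<subseteq> W"
  proof
    fix v assume v: "v \<in> Vsp N"
    have "(\<lambda>j. \<Sum>i\<in>{-N..N-1}. v i * ub N i j) \<in> W" using h by (intro W_sum) auto
    moreover have "(\<lambda>j. \<Sum>i\<in>{-N..N-1}. v i * ub N i j) = v"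
    proof
      fix j
      have "(\<Sum>i\<in>{-N..N-1}. v i * ub N i j) = (\<Sum>i\<in>{-N..N-1}. if i = j then v j else 0)"
        by (rule sum.cong) (auto simp: ub_def)
      also have "\<dots> = v j" using v by (auto simp: Vsp_def)
      finally show "(\<Sum>i\<in>{-N..N-1}. v i * ub N i j) = v j" .
    qed
    ultimately show "v \<in> W" by simp
  qed
qed (use W_Vsp in auto)

lemma phaseA:
  assumes dist: "\<And>a b. 1 \<le> a \<Longrightarrow> a \<le> N-1 \<Longrightarrow> 1 \<le> b \<Longrightarrow> b \<le> N-1 \<Longrightarrow> a \<noteq> b \<Longrightarrow> lam q a \<noteq> lam q b"
  shows "v \<in> W \<Longrightarrow> v \<noteq> (\<lambda>_. 0) \<Longrightarrow> \<exists>v'\<in>W. v' \<noteq> (\<lambda>_. 0) \<and> (\<forall>j>0. v' j = 0)"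
proof (induction "card {j\<in>{1..N-1}. v j \<noteq> 0}" arbitrary: v rule: less_induct)
  case (less v)
  show ?case
  proof (cases "{j\<in>{1..N-1}. v j \<noteq> 0} = {}")
    case True
    have "\<forall>j>0. v j = 0"
    proof (intro allI impI)
      fix j :: int assume "j > 0"
      show "v j = 0"
      proof (cases "j \<le> N-1")
        case True thus ?thesis using \<open>j>0\<close> \<open>{j\<in>{1..N-1}. v j \<noteq> 0} = {}\<close> by auto
      next
        case False thus ?thesis using W_Vsp[OF less.prems(1)] by (auto simp: Vsp_def)
      qed
    qed
    thus ?thesis using less.prems by blast
  next
    case False
    then obtain t where t: "1 \<le> t" "t \<le> N-1" "v t \<noteq> 0" by auto
    define v' where "v' = (\<lambda>j. rho0 q N v j - lam q t * v j)"
    have v'W: "v' \<in> W" unfolding v'_def using less.prems W_T by blast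
    have v'pos: "v' j = (lam q j - lam q t) * v j" if "1 \<le> j" "j \<le> N-1" for j
      using that unfolding v'_def rho0_apply by (simp add: algebra_simps)
    have v'neg: "v' (-t) = v t" using t unfolding v'_def rho0_apply by (simp add: lam_neg algebra_simps)
    have set: "{j\<in>{1..N-1}. v' j \<noteq> 0} = {j\<in>{1..N-1}. v j \<noteq> 0} - {t}"
      using dist t by (auto simp: v'pos)
    have fin: "finite {j\<in>{1..N-1}. v j \<noteq> 0}" by (rule finite_subset[of _ "{1..N-1}"]) auto
    have "card {j\<in>{1..N-1}. v' j \<noteq> 0} < card {j\<in>{1..N-1}. v j \<noteq> 0}"
      unfolding set using t by (intro card_Diff1_less[OF fin]) auto
    moreover have "v' \<noteq> (\<lambda>_. 0)" using v'neg t by (metis)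
    ultimately show ?thesis using less.hyps v'W by blast
  qed
qed

lemma phaseB:
  assumes dist: "\<And>a b. -N \<le> a \<Longrightarrow> a \<le> 0 \<Longrightarrow> -N \<le> b \<Longrightarrow> b \<le> 0 \<Longrightarrow> a \<noteq> b \<Longrightarrow> lam q a \<noteq> lam q b"
  shows "v \<in> W \<Longrightarrow> v \<noteq> (\<lambda>_. 0) \<Longrightarrow> (\<forall>j>0. v j = 0) \<Longrightarrow> \<exists>t. -N \<le> t \<and> t \<le> 0 \<and> ub N t \<in> W"
proof (induction "card {j\<in>{-N..0}. v j \<noteq> 0}" arbitrary: v rule: less_induct)
  case (less v)
  have vV: "v \<in> Vsp N" using W_Vsp less.prems by blast
  obtain t where t: "-N \<le> t" "t \<le> 0" "v t \<noteq> 0" "t \<le> N - 1"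
  proof -
    obtain j where "v j \<noteq> 0" using less.prems(2) by auto
    moreover have "j \<le> 0" using less.prems(3) \<open>v j \<noteq> 0\<close> by (meson not_le)
    moreover have "-N \<le> j" using vV \<open>v j \<noteq> 0\<close> by (auto simp: Vsp_def) (meson not_le)
    moreover have "j \<le> N-1" using vV \<open>v j \<noteq> 0\<close> by (auto simp: Vsp_def) (meson not_le)
    ultimately show ?thesis using that by blast
  qed
  define v' where "v' = (\<lambda>j. rho0 q N v j - lam q t * v j)"
  have v'W: "v' \<in> W" unfolding v'_def using less.prems W_T by blast
  have v'all: "v' j = (lam q j - lam q t) * v j" for j
  proof -
    have "-N < j \<Longrightarrow> j < 0 \<Longrightarrow> v (-j) = 0" using less.prems(3) by auto
    moreover have "\<not> (-N \<le> j \<and> j \<le> N-1) \<Longrightarrow> v j = 0" using vV by (auto simp: Vsp_def)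
    ultimately show ?thesis unfolding v'_def rho0_apply by (auto simp: algebra_simps)
  qed
  show ?case
  proof (cases "{j\<in>{-N..0}. v j \<noteq> 0} = {t}")
    case True
    have "v = (\<lambda>j. v t * ub N t j)"
    proof
      fix j show "v j = v t * ub N t j"
      proof (cases "j = t")
        case False
        have "v j = 0"
        proof (rule ccontr)
          assume "v j \<noteq> 0"
          moreover have "j \<le> 0" using less.prems(3) \<open>v j \<noteq> 0\<close> by (meson not_le)
          moreover have "-N \<le> j" using vV \<open>v j \<noteq> 0\<close> by (auto simp: Vsp_def) (meson not_le)
          ultimately show False using True False by auto
        qed
        thus ?thesis using False by (simp add: ub_def)
      qed (use t in \<open>auto simp: ub_def\<close>)
    qed
    hence "(\<lambda>j. v t * ub N t j) \<in> W" using less.prems by simp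
    hence "ub N t \<in> W" using W_unscale t by blast
    thus ?thesis using t by blast
  next
    case False
    have set: "{j\<in>{-N..0}. v' j \<noteq> 0} = {j\<in>{-N..0}. v j \<noteq> 0} - {t}"
      using dist t by (auto simp: v'all)
    have "card {j\<in>{-N..0}. v' j \<noteq> 0} < card {j\<in>{-N..0}. v j \<noteq> 0}"
      unfolding set using t by (intro card_Diff1_less) (auto intro: finite_subset[OF _ finite_atLeastAtMost_int])
    moreover have "v' \<noteq> (\<lambda>_. 0)"
    proof -
      obtain s where "s \<in> {j\<in>{-N..0}. v j \<noteq> 0}" "s \<noteq> t" using False t by auto
      hence "v' s \<noteq> 0" using set by auto
      thus ?thesis by auto
    qed
    moreover have "\<forall>j>0. v' j = 0" using less.prems(3) v'all by simp
    ultimately show ?thesis using less.hyps v'W by blast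
  qed
qed

end


lemma ub_out: "\<not> (-N \<le> j \<and> j \<le> N-1) \<Longrightarrow> ub N i j = 0" by (auto simp: ub_def)

lemma WK_inv:
  assumes f0: "\<And>i j. -N \<le> i \<Longrightarrow> i \<le> N-1 \<Longrightarrow> \<not>K i \<Longrightarrow> K j \<Longrightarrow> f i j = 0"
    and fout: "\<And>i j. \<not>(-N \<le> j \<and> j \<le> N-1) \<Longrightarrow> f i j = 0"
    and v: "v \<in> {v \<in> Vsp N. \<forall>j. K j \<longrightarrow> v j = 0}"
  shows "linext N f v \<in> {v \<in> Vsp N. \<forall>j. K j \<longrightarrow> v j = 0}"
proof -
  have "linext N f v \<in> Vsp N" unfolding Vsp_def linext_def using fout by auto
  moreover have "linext N f v j = 0" if "K j" for j
    unfolding linext_def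
  proof (rule sum.neutral, rule ballI)
    fix i assume "i \<in> {-N..N-1}"
    thus "v i * f i j = 0" using f0[of i j] v \<open>K j\<close> by (cases "K i") auto
  qed
  ultimately show ?thesis by blast
qed

lemma reducible_K:
  assumes f0: "\<And>i j. -N \<le> i \<Longrightarrow> i \<le> N-1 \<Longrightarrow> \<not>K i \<Longrightarrow> K j \<Longrightarrow> rho0_u q N i j = 0"
    and f1: "\<And>i j. -N \<le> i \<Longrightarrow> i \<le> N-1 \<Longrightarrow> \<not>K i \<Longrightarrow> K j \<Longrightarrow> rhoInf_u q k N i j = 0"
    and a: "-N \<le> a" "a \<le> N-1" "\<not> K a" and b: "-N \<le> b" "b \<le> N-1" "K b"
  shows "reducible_rep q k N"
  unfolding reducible_rep_def
proof (intro exI conjI)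
  let ?W = "{v \<in> Vsp N. \<forall>j. K j \<longrightarrow> v j = 0}"
  show "csubspace_of N ?W" unfolding csubspace_of_def Vsp_def by auto
  have "ub N a \<in> ?W" using a by (auto simp: Vsp_def ub_def)
  moreover have "ub N a \<noteq> (\<lambda>_. 0)" using a by (metis ub_def zero_neq_one)
  ultimately show "?W \<noteq> {\<lambda>_. 0}" by blast
  have "ub N b \<in> Vsp N" "ub N b \<notin> ?W" using b by (auto simp: Vsp_def ub_def)
  thus "?W \<noteq> Vsp N" by blast
  show "\<forall>v\<in>?W. rho0 q N v \<in> ?W \<and> rhoInf q k N v \<in> ?W"
  proof
    fix v assume v: "v \<in> ?W"
    show "rho0 q N v \<in> ?W \<and> rhoInf q k N v \<in> ?W"
      unfolding rho0_def rhoInf_def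
    proof
      show "linext N (rho0_u q N) v \<in> ?W"
        by (rule WK_inv[OF f0 _ v]) (auto simp: rho0_u_def ub_out)
      show "linext N (rhoInf_u q k N) v \<in> ?W"
        by (rule WK_inv[OF f1 _ v]) (auto simp: rhoInf_u_def ub_out)
    qed
  qed
qed

context rs begin

lemma sc0: "N dvd (i - k) \<Longrightarrow> sc q k i = 0"
  unfolding sc_def using diff0'[of i k] by simp

lemma sc'0: "N dvd (i - k) \<Longrightarrow> sc' q k i = 0"
  unfolding sc'_def using sc0 by simp

lemma red1:
  assumes m: "0 \<le> m" "2*m+2 \<le> N" "N dvd (k - m)"
  shows "reducible_rep q k N"
proof (rule reducible_K[where K="\<lambda>j. m+1 \<le> j \<and> j \<le> N-1-m" and a=0 and b="m+1"])
  have s1: "sc q k m = 0" "sc' q k m = 0" using m sc0[of m] sc'0[of m]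
    by (metis dvd_minus_iff minus_diff_eq)+
  have s2: "sc' q k (m - N) = 0"
  proof -
    have "N dvd (m - N - k)" using m(3)
      by (metis diff_diff_eq2 diff_minus_eq_add dvd_diff dvd_minus_iff dvd_refl minus_diff_eq add.commute diff_add_eq)
    thus ?thesis by (rule sc'0)
  qed
  have s3: "m = 0 \<Longrightarrow> qp q (2*k) - qp q (-2*k) = 0" using m diff0[of k] by simp
  fix i j :: int
  assume i: "-N \<le> i" "i \<le> N-1" "\<not> (m+1 \<le> i \<and> i \<le> N-1-m)" and j: "m+1 \<le> j \<and> j \<le> N-1-m"
  show "rho0_u q N i j = 0" using i j m by (auto simp: rho0_u_def ub_def)
  have ubz: "\<And>x. x \<noteq> j \<Longrightarrow> ub N x j = 0" by (simp add: ub_def)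
  consider "i = -N" | "-N < i \<and> i < 0" | "i = 0" | "0 < i" using i by linarith
  then show "rhoInf_u q k N i j = 0"
  proof cases
    case 1
    have "ub N (-N+1) j = 0" using j m by (intro ubz) simp
    moreover have "(qp q 2 - qp q (-2)) * (qp q (2*k) - qp q (-2*k)) * ub N (N - 1) j = 0"
    proof (cases "m = 0")
      case True then show ?thesis using s3 by simp
    next
      case False then show ?thesis using j m by (simp add: ubz)
    qed
    ultimately show ?thesis using 1 by (simp add: rhoInf_u_def)
  next
    case 2
    have "ub N (i+1) j = 0" "ub N (i-1) j = 0" using j m 2 by (auto intro!: ubz)
    thus ?thesis using 2 by (simp add: rhoInf_u_def)
  next
    case 3
    have "ub N (-1) j = 0" using j m by (intro ubz) simp
    moreover have "(qp q 2 - qp q (-2)) * (qp q (2*k) - qp q (-2*k)) * ub N 1 j = 0"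
    proof (cases "m = 0")
      case True then show ?thesis using s3 by simp
    next
      case False then show ?thesis using j m by (simp add: ubz)
    qed
    ultimately show ?thesis using 3 N2 by (simp add: rhoInf_u_def)
  next
    case 4
    have a: "ub N (-i-1) j = 0" "ub N (-i+1) j = 0" using j m 4 by (auto intro!: ubz)
    have b: "sc' q k (-i) * ub N (i - 1) j = 0"
    proof (cases "i - 1 = j")
      case True
      hence "i = N - m" using i j by linarith
      hence "-i = m - N" by simp
      thus ?thesis using s2 by simp
    qed (simp add: ubz)
    have c: "sc' q k i * ub N (i + 1) j = 0"
    proof (cases "i + 1 = j")
      case True
      hence "i = m" using i j by linarith
      thus ?thesis using s1 by simp
    qed (simp add: ubz)
    show ?thesis using 4 N2 a b c by (auto simp: rhoInf_u_def)
  qed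
qed (use m N2 in auto)

lemma red2:
  assumes m: "N \<le> 2*m" "m \<le> N - 1" "N dvd (k - m)"
  shows "reducible_rep q k N"
proof (rule reducible_K[where K="\<lambda>j. j < -m \<or> m - N < j" and a="-m" and b=0])
  have s1: "sc q k m = 0" using m sc0[of m]
    by (metis dvd_minus_iff minus_diff_eq)
  have s2: "sc q k (m - N) = 0"
  proof -
    have "N dvd (m - N - k)" using m(3)
      by (metis diff_diff_eq2 diff_minus_eq_add dvd_diff dvd_minus_iff dvd_refl minus_diff_eq add.commute diff_add_eq)
    thus ?thesis by (rule sc0)
  qed
  fix i j :: int
  assume i: "-N \<le> i" "i \<le> N-1" "\<not> (i < -m \<or> m - N < i)" and j: "j < -m \<or> m - N < j"
  have ubz: "\<And>x. x \<noteq> j \<Longrightarrow> ub N x j = 0" by (simp add: ub_def)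
  show "rho0_u q N i j = 0" using i j m by (auto simp: rho0_u_def ub_def)
  have i2: "-N < i" "i < 0" using i m by linarith+
  have b: "sc q k i * ub N (i + 1) j = 0"
  proof (cases "i + 1 = j")
    case True
    hence "i = m - N" using i j by linarith
    thus ?thesis using s2 by simp
  qed (simp add: ubz)
  have c: "sc q k (-i) * ub N (i - 1) j = 0"
  proof (cases "i - 1 = j")
    case True
    hence "i = - m" using i j by linarith
    thus ?thesis using s1 by simp
  qed (simp add: ubz)
  show "rhoInf_u q k N i j = 0" using i2 b c by (auto simp: rhoInf_u_def)
qed (use m N2 in auto)

end


lemma linext_comb2: "linext N f (\<lambda>j. a * x j + b * y j) = (\<lambda>j. a * linext N f x j + b * linext N f y j)"
  unfolding linext_def
  by (rule ext) (simp add: distrib_right sum.distrib sum_distrib_left mult.assoc)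

lemma rho0_ub_neg: "0 < N \<Longrightarrow> -N \<le> i \<Longrightarrow> i \<le> 0 \<Longrightarrow> rho0 q N (ub N i) = (\<lambda>j. lam q i * ub N i j)"
  unfolding rho0_def by (subst linext_ub) (auto simp: rho0_u_def)

lemma rho0_ub_pos: "0 < i \<Longrightarrow> i \<le> N-1 \<Longrightarrow> rho0 q N (ub N i) = (\<lambda>j. lam q i * ub N i j + ub N (-i) j)"
  unfolding rho0_def by (subst linext_ub) (auto simp: rho0_u_def)

lemma rhoInf_ub: "-N \<le> i \<Longrightarrow> i \<le> N-1 \<Longrightarrow> rhoInf q k N (ub N i) = rhoInf_u q k N i"
  unfolding rhoInf_def by (rule linext_ub)

context fixes q k N W assumes W: "invsub q k N W" and Npos: "0 < N"
begin

lemma sepE: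
  assumes x: "(\<lambda>j. a * ub N p j + b * ub N r j) \<in> W" and p: "-N \<le> p" "p \<le> 0"
    and r: "-N \<le> r" "r \<le> 0" and ne: "lam q p \<noteq> lam q r" and a: "a \<noteq> 0"
  shows "ub N p \<in> W"
proof -
  have "(\<lambda>j. rho0 q N (\<lambda>j. a * ub N p j + b * ub N r j) j - lam q r * (a * ub N p j + b * ub N r j)) \<in> W"
    using W_T[OF W x] by simp
  moreover have "(\<lambda>j. rho0 q N (\<lambda>j. a * ub N p j + b * ub N r j) j - lam q r * (a * ub N p j + b * ub N r j))
     = (\<lambda>j. (a * (lam q p - lam q r)) * ub N p j)"
    unfolding rho0_def linext_comb2 unfolding rho0_def[symmetric]
    using p r Npos by (simp add: rho0_ub_neg algebra_simps)
  ultimately show ?thesis using W_unscale[OF W, of "a * (lam q p - lam q r)" "ub N p"] a ne by simp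
qed

lemma sepJ:
  assumes x: "(\<lambda>j. c * ub N (-t) j + d * ub N t j) \<in> W" and t: "0 < t" "t \<le> N-1" and d: "d \<noteq> 0"
  shows "ub N (-t) \<in> W \<and> ub N t \<in> W"
proof -
  have "(\<lambda>j. rho0 q N (\<lambda>j. c * ub N (-t) j + d * ub N t j) j - lam q t * (c * ub N (-t) j + d * ub N t j)) \<in> W"
    using W_T[OF W x] by simp
  moreover have "(\<lambda>j. rho0 q N (\<lambda>j. c * ub N (-t) j + d * ub N t j) j - lam q t * (c * ub N (-t) j + d * ub N t j))
     = (\<lambda>j. d * ub N (-t) j)"
    unfolding rho0_def linext_comb2 unfolding rho0_def[symmetric]
    using t Npos by (simp add: rho0_ub_neg rho0_ub_pos lam_neg algebra_simps)
  ultimately have 1: "ub N (-t) \<in> W" using W_unscale[OF W, of d "ub N (-t)"] d by simp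
  have "(\<lambda>j. (c * ub N (-t) j + d * ub N t j) + (-c) * ub N (-t) j) \<in> W"
    using W_comb[OF W x 1, of "-c"] by simp
  moreover have "(\<lambda>j. (c * ub N (-t) j + d * ub N t j) + (-c) * ub N (-t) j) = (\<lambda>j. d * ub N t j)"
    by (simp add: algebra_simps)
  ultimately have "ub N t \<in> W" using W_unscale[OF W, of d "ub N t"] d by simp
  with 1 show ?thesis by blast
qed

lemma lin4:
  assumes F: "(\<lambda>j. a1 * x1 j - a2 * x2 j + a3 * x3 j + a4 * x4 j) \<in> W"
  shows "x1 \<in> W \<Longrightarrow> x2 \<in> W \<Longrightarrow> x3 \<in> W \<Longrightarrow> a4 \<noteq> 0 \<Longrightarrow> x4 \<in> W"
    and "x2 \<in> W \<Longrightarrow> x3 \<in> W \<Longrightarrow> a4 = 0 \<Longrightarrow> a1 \<noteq> 0 \<Longrightarrow> x1 \<in> W"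
    and "x1 \<in> W \<Longrightarrow> x2 \<in> W \<Longrightarrow> x4 \<in> W \<Longrightarrow> a3 \<noteq> 0 \<Longrightarrow> x3 \<in> W"
    and "x1 \<in> W \<Longrightarrow> x4 \<in> W \<Longrightarrow> a3 = 0 \<Longrightarrow> a2 \<noteq> 0 \<Longrightarrow> x2 \<in> W"
proof -
  let ?F = "\<lambda>j. a1 * x1 j - a2 * x2 j + a3 * x3 j + a4 * x4 j"
  have c: "\<And>x y c. x \<in> W \<Longrightarrow> y \<in> W \<Longrightarrow> (\<lambda>j. x j + c * y j) \<in> W" using W_comb[OF W] by blast
  {
    assume h: "x1 \<in> W" "x2 \<in> W" "x3 \<in> W" "a4 \<noteq> 0"
    have "(\<lambda>j. ?F j + (-a1) * x1 j) \<in> W" by (rule c[OF F h(1)])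
    from c[OF this h(2), of a2] have "(\<lambda>j. (?F j + (-a1) * x1 j) + a2 * x2 j) \<in> W" by simp
    from c[OF this h(3), of "-a3"] have "(\<lambda>j. ((?F j + (-a1) * x1 j) + a2 * x2 j) + (-a3) * x3 j) \<in> W" by simp
    moreover have "(\<lambda>j. ((?F j + (-a1) * x1 j) + a2 * x2 j) + (-a3) * x3 j) = (\<lambda>j. a4 * x4 j)"
      by (simp add: algebra_simps)
    ultimately show "x4 \<in> W" using W_unscale[OF W, of a4 x4] h(4) by simp
  }
  {
    assume h: "x2 \<in> W" "x3 \<in> W" "a4 = 0" "a1 \<noteq> 0"
    have "(\<lambda>j. ?F j + a2 * x2 j) \<in> W" by (rule c[OF F h(1)])
    from c[OF this h(2), of "-a3"] have "(\<lambda>j. (?F j + a2 * x2 j) + (-a3) * x3 j) \<in> W" by simp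
    moreover have "(\<lambda>j. (?F j + a2 * x2 j) + (-a3) * x3 j) = (\<lambda>j. a1 * x1 j)"
      using h(3) by (simp add: algebra_simps)
    ultimately show "x1 \<in> W" using W_unscale[OF W, of a1 x1] h(4) by simp
  }
  {
    assume h: "x1 \<in> W" "x2 \<in> W" "x4 \<in> W" "a3 \<noteq> 0"
    have "(\<lambda>j. ?F j + (-a1) * x1 j) \<in> W" by (rule c[OF F h(1)])
    from c[OF this h(2), of a2] have "(\<lambda>j. (?F j + (-a1) * x1 j) + a2 * x2 j) \<in> W" by simp
    from c[OF this h(3), of "-a4"] have "(\<lambda>j. ((?F j + (-a1) * x1 j) + a2 * x2 j) + (-a4) * x4 j) \<in> W" by simp
    moreover have "(\<lambda>j. ((?F j + (-a1) * x1 j) + a2 * x2 j) + (-a4) * x4 j) = (\<lambda>j. a3 * x3 j)"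
      by (simp add: algebra_simps)
    ultimately show "x3 \<in> W" using W_unscale[OF W, of a3 x3] h(4) by simp
  }
  {
    assume h: "x1 \<in> W" "x4 \<in> W" "a3 = 0" "a2 \<noteq> 0"
    have "(\<lambda>j. ?F j + (-a1) * x1 j) \<in> W" by (rule c[OF F h(1)])
    from c[OF this h(2), of "-a4"] have "(\<lambda>j. (?F j + (-a1) * x1 j) + (-a4) * x4 j) \<in> W" by simp
    moreover have "(\<lambda>j. (?F j + (-a1) * x1 j) + (-a4) * x4 j) = (\<lambda>j. (-a2) * x2 j)"
      using h(3) by (simp add: algebra_simps)
    ultimately show "x2 \<in> W" using W_unscale[OF W, of "-a2" x2] h(4) by simp
  }
qed

end


context rs begin

lemma ndvd: "-N < x \<Longrightarrow> x < N \<Longrightarrow> x \<noteq> 0 \<Longrightarrow> \<not> N dvd x"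
  using dvd_small by blast

lemma sc_nz: "\<not> N dvd (i - k) \<Longrightarrow> \<not> N dvd i \<Longrightarrow> sc q k i \<noteq> 0"
  unfolding sc_def using diff0'[of i k] diff0[of i] by simp

lemma sc'_nz: "\<not> N dvd (i + 1) \<Longrightarrow> \<not> N dvd i \<Longrightarrow> \<not> N dvd (i - k) \<Longrightarrow> sc' q k i \<noteq> 0"
proof -
  assume h: "\<not> N dvd (i + 1)" "\<not> N dvd i" "\<not> N dvd (i - k)"
  have e: "2*i+2 = 2*(i+1)" "-2*i-2 = -2*(i+1)" by simp_all
  have "qp q (2*i+2) - qp q (-2*i-2) \<noteq> 0" unfolding e using diff0[of "i+1"] h by simp
  thus ?thesis unfolding sc'_def using sc_nz[OF h(3,2)] diff0[of i] h by simp
qed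

lemma bet_nz: "\<not> N dvd k \<Longrightarrow> \<not> N dvd i \<Longrightarrow> bet q k i \<noteq> 0"
  unfolding bet_def using diff0[of k] diff0[of i] by simp

lemma c_nz: "\<not> N dvd 2*k \<Longrightarrow> qp q (2*k) + qp q (-2*k) \<noteq> 0"
  using sum0[of k] by auto

lemma d_nz: "\<not> N dvd k \<Longrightarrow> (qp q 2 - qp q (-2)) * (qp q (2*k) - qp q (-2*k)) \<noteq> 0"
proof -
  assume h: "\<not> N dvd k"
  have "\<not> N dvd 1" using N2 by auto
  hence "qp q (2*1) - qp q (-2*1) \<noteq> 0" using diff0[of 1] by blast
  thus ?thesis using diff0[of k] h by simp
qed

lemma lam_dist_pos: "1 \<le> a \<Longrightarrow> a \<le> N-1 \<Longrightarrow> 1 \<le> b \<Longrightarrow> b \<le> N-1 \<Longrightarrow> a \<noteq> b \<Longrightarrow> lam q a \<noteq> lam q b"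
proof
  assume h: "1 \<le> a" "a \<le> N-1" "1 \<le> b" "b \<le> N-1" "a \<noteq> b" "lam q a = lam q b"
  from lam_eq[OF h(6)] show False
  proof
    assume "2*N dvd (a - b)"
    hence "N dvd (a - b)" by (metis dvd_mult_right)
    thus False using ndvd[of "a-b"] h by linarith
  next
    assume "2*N dvd (a + b)"
    thus False using dvd_small[of "2*N" "a+b"] h by linarith
  qed
qed

lemma lam_dist_neg: "-N \<le> a \<Longrightarrow> a \<le> 0 \<Longrightarrow> -N \<le> b \<Longrightarrow> b \<le> 0 \<Longrightarrow> a \<noteq> b \<Longrightarrow> lam q a \<noteq> lam q b"
proof
  assume h: "-N \<le> a" "a \<le> 0" "-N \<le> b" "b \<le> 0" "a \<noteq> b" "lam q a = lam q b"
  from lam_eq[OF h(6)] show False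
  proof
    assume "2*N dvd (a - b)"
    thus False using dvd_small[of "2*N" "a-b"] h N2 by linarith
  next
    assume d: "2*N dvd (a + b)"
    show False
    proof (cases "a + b = -2*N")
      case True thus False using h by linarith
    next
      case False thus False using dvd_small[of "2*N" "a+b"] d h N2 by linarith
    qed
  qed
qed

end


locale irr = rs +
  fixes m :: int
  assumes Nm: "N = 2*m+1" and km: "N dvd (k - m)"
begin

lemma m1: "m \<ge> 1" using Nm N2 by linarith

lemma dk: "N dvd (i - k) \<longleftrightarrow> N dvd (i - m)"
proof -
  have "i - k = (i - m) - (k - m)" by simp
  thus ?thesis using km by (metis dvd_diff diff_add_cancel dvd_add)
qed

lemma Npos: "0 < N" using N2 by simp

lemma ubN: "ub N N = (\<lambda>_. 0)" by (simp add: ub_def)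

lemma B_neg: "-N < i \<Longrightarrow> i < 0 \<Longrightarrow> rhoInf q k N (ub N i) = (\<lambda>j. sc q k i * ub N (i+1) j + sc q k (-i) * ub N (i - 1) j)"
  by (subst rhoInf_ub) (auto simp: rhoInf_u_def)

lemma B_negN: "rhoInf q k N (ub N (-N)) = (\<lambda>j. (qp q (2*k) + qp q (-2*k)) * ub N (-(N-1)) j
            + (qp q 2 - qp q (-2)) * (qp q (2*k) - qp q (-2*k)) * ub N (N - 1) j)"
  using N2 by (subst rhoInf_ub) (auto simp: rhoInf_u_def)

lemma B_zero: "rhoInf q k N (ub N 0) = (\<lambda>j. (qp q (2*k) + qp q (-2*k)) * ub N (-1) j
            + (-((qp q 2 - qp q (-2)) * (qp q (2*k) - qp q (-2*k)))) * ub N 1 j)"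
  using N2 by (subst rhoInf_ub) (auto simp: rhoInf_u_def)

lemma B_pos: "0 < i \<Longrightarrow> i \<le> N-1 \<Longrightarrow> rhoInf q k N (ub N i) = (\<lambda>j. bet q k i * ub N (-i-1) j - bet q k i * ub N (-i+1) j
            + sc' q k (-i) * ub N (i - 1) j + sc' q k i * ub N (i+1) j)"
  by (subst rhoInf_ub) (auto simp: rhoInf_u_def)

lemma nk: "\<not> N dvd k"
proof
  assume "N dvd k"
  hence "N dvd m" using dk[of 0] by simp
  thus False using ndvd[of m] m1 Nm by linarith
qed

lemma n2k: "\<not> N dvd 2*k"
proof
  assume a: "N dvd 2*k"
  have "N dvd 2*(k-m)" using km by (rule dvd_mult)
  hence "N dvd 2*k - 2*(k-m)" using a by (rule dvd_diff[rotated])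
  hence "N dvd 2*m" by (simp add: algebra_simps)
  hence "N dvd N - 2*m" by (simp add: dvd_diff)
  hence "N dvd 1" using Nm by simp
  thus False using N2 by auto
qed

lemma ndvd': "-N < x \<Longrightarrow> x < N \<Longrightarrow> x \<noteq> 0 \<Longrightarrow> \<not> N dvd (x - N)"
  using ndvd[of x] by (metis dvd_diff dvd_refl diff_add_cancel dvd_add)

context fixes W assumes W: "invsub q k N W"
begin

lemma BW: "ub N i \<in> W \<Longrightarrow> rhoInf q k N (ub N i) \<in> W" using W_rhoInf[OF W] .

lemma up1: "-m \<le> i \<Longrightarrow> i \<le> -1 \<Longrightarrow> ub N i \<in> W \<Longrightarrow> ub N (i+1) \<in> W"
proof -
  assume i: "-m \<le> i" "i \<le> -1" "ub N i \<in> W"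
  have F: "(\<lambda>j. sc q k i * ub N (i+1) j + sc q k (-i) * ub N (i - 1) j) \<in> W"
    using BW[OF i(3)] B_neg[of i] i Nm by simp
  have "\<not> N dvd (i - m)" by (rule ndvd) (use i Nm in linarith)+
  hence "\<not> N dvd (i - k)" using dk by simp
  moreover have "\<not> N dvd i" by (rule ndvd) (use i Nm in linarith)+
  ultimately have a: "sc q k i \<noteq> 0" by (rule sc_nz)
  have l: "lam q (i+1) \<noteq> lam q (i-1)" by (rule lam_dist_neg) (use i Nm in linarith)+
  show ?thesis by (rule sepE[OF W Npos F _ _ _ _ l a]) (use i Nm in linarith)+
qed

lemma down1: "-m+1 \<le> i \<Longrightarrow> i \<le> -1 \<Longrightarrow> ub N i \<in> W \<Longrightarrow> ub N (i-1) \<in> W"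
proof -
  assume i: "-m+1 \<le> i" "i \<le> -1" "ub N i \<in> W"
  have F: "(\<lambda>j. sc q k (-i) * ub N (i - 1) j + sc q k i * ub N (i+1) j) \<in> W"
    using BW[OF i(3)] B_neg[of i] i Nm by (simp add: add.commute)
  have "\<not> N dvd (-i - m)" by (rule ndvd) (use i Nm in linarith)+
  hence "\<not> N dvd (-i - k)" using dk by simp
  moreover have "\<not> N dvd (-i)" by (rule ndvd) (use i Nm in linarith)+
  ultimately have a: "sc q k (-i) \<noteq> 0" by (rule sc_nz)
  have l: "lam q (i-1) \<noteq> lam q (i+1)" by (rule lam_dist_neg) (use i Nm in linarith)+
  show ?thesis by (rule sepE[OF W Npos F _ _ _ _ l a]) (use i Nm in linarith)+
qed

lemma down2: "-N+1 \<le> i \<Longrightarrow> i \<le> -m-1 \<Longrightarrow> ub N i \<in> W \<Longrightarrow> ub N (i-1) \<in> W"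
proof -
  assume i: "-N+1 \<le> i" "i \<le> -m-1" "ub N i \<in> W"
  have F: "(\<lambda>j. sc q k (-i) * ub N (i - 1) j + sc q k i * ub N (i+1) j) \<in> W"
    using BW[OF i(3)] B_neg[of i] i Nm by (simp add: add.commute)
  have "\<not> N dvd (-i - m)" by (rule ndvd) (use i Nm in linarith)+
  hence "\<not> N dvd (-i - k)" using dk by simp
  moreover have "\<not> N dvd (-i)" by (rule ndvd) (use i Nm in linarith)+
  ultimately have a: "sc q k (-i) \<noteq> 0" by (rule sc_nz)
  have l: "lam q (i-1) \<noteq> lam q (i+1)" by (rule lam_dist_neg) (use i Nm in linarith)+
  show ?thesis by (rule sepE[OF W Npos F _ _ _ _ l a]) (use i Nm in linarith)+
qed

lemma up2: "-N+1 \<le> i \<Longrightarrow> i \<le> -m-2 \<Longrightarrow> ub N i \<in> W \<Longrightarrow> ub N (i+1) \<in> W"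
proof -
  assume i: "-N+1 \<le> i" "i \<le> -m-2" "ub N i \<in> W"
  have F: "(\<lambda>j. sc q k i * ub N (i+1) j + sc q k (-i) * ub N (i - 1) j) \<in> W"
    using BW[OF i(3)] B_neg[of i] i Nm by simp
  have "\<not> N dvd ((i - m + N) - N)" by (rule ndvd') (use i Nm in linarith)+
  hence "\<not> N dvd (i - k)" using dk by simp
  moreover have "\<not> N dvd i" by (rule ndvd) (use i Nm in linarith)+
  ultimately have a: "sc q k i \<noteq> 0" by (rule sc_nz)
  have l: "lam q (i+1) \<noteq> lam q (i-1)" by (rule lam_dist_neg) (use i Nm in linarith)+
  show ?thesis by (rule sepE[OF W Npos F _ _ _ _ l a]) (use i Nm in linarith)+
qed

lemma zeroJ: "ub N 0 \<in> W \<Longrightarrow> ub N (-1) \<in> W \<and> ub N 1 \<in> W"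
proof -
  assume "ub N 0 \<in> W"
  from BW[OF this] have F: "(\<lambda>j. (qp q (2*k) + qp q (-2*k)) * ub N (-1) j
            + (-((qp q 2 - qp q (-2)) * (qp q (2*k) - qp q (-2*k)))) * ub N 1 j) \<in> W"
    unfolding B_zero .
  from sepJ[OF W Npos F] show ?thesis using d_nz[OF nk] N2 by simp
qed

lemma negNJ: "ub N (-N) \<in> W \<Longrightarrow> ub N (-(N-1)) \<in> W \<and> ub N (N-1) \<in> W"
proof -
  assume "ub N (-N) \<in> W"
  from BW[OF this] have F: "(\<lambda>j. (qp q (2*k) + qp q (-2*k)) * ub N (-(N-1)) j
            + (qp q 2 - qp q (-2)) * (qp q (2*k) - qp q (-2*k)) * ub N (N - 1) j) \<in> W"
    unfolding B_negN .
  show ?thesis using sepJ[OF W Npos F] d_nz[OF nk] N2 by simp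
qed

lemma BposW: "0 < i \<Longrightarrow> i \<le> N-1 \<Longrightarrow> ub N i \<in> W \<Longrightarrow>
  (\<lambda>j. bet q k i * ub N (-i-1) j - bet q k i * ub N (-i+1) j
            + sc' q k (-i) * ub N (i - 1) j + sc' q k i * ub N (i+1) j) \<in> W"
proof -
  assume i: "0 < i" "i \<le> N-1" and h: "ub N i \<in> W"
  from BW[OF h] show ?thesis unfolding B_pos[OF i] .
qed

lemma pos_up: "1 \<le> i \<Longrightarrow> i \<le> m-1 \<Longrightarrow> ub N i \<in> W \<Longrightarrow> ub N (-i-1) \<in> W \<Longrightarrow> ub N (-i+1) \<in> W
   \<Longrightarrow> ub N (i-1) \<in> W \<Longrightarrow> ub N (i+1) \<in> W"
proof -
  assume i: "1 \<le> i" "i \<le> m-1" "ub N i \<in> W" and h: "ub N (-i-1) \<in> W" "ub N (-i+1) \<in> W" "ub N (i-1) \<in> W"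
  have "\<not> N dvd (i - m)" by (rule ndvd) (use i Nm in linarith)+
  hence "\<not> N dvd (i - k)" using dk by simp
  moreover have "\<not> N dvd i" by (rule ndvd) (use i Nm in linarith)+
  moreover have "\<not> N dvd (i+1)" by (rule ndvd) (use i Nm in linarith)+
  ultimately have "sc' q k i \<noteq> 0" by (intro sc'_nz)
  have i': "0 < i" "i \<le> N-1" using i Nm by linarith+
  show ?thesis by (rule lin4(1)[OF W Npos BposW[OF i' i(3)] h]) fact
qed

lemma conn1: "ub N m \<in> W \<Longrightarrow> ub N (-m+1) \<in> W \<Longrightarrow> ub N (m-1) \<in> W \<Longrightarrow> ub N (-m-1) \<in> W"
proof -
  assume h: "ub N m \<in> W" "ub N (-m+1) \<in> W" "ub N (m-1) \<in> W"
  have z: "sc' q k m = 0" using sc'0[of m] dk[of m] by simp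
  have "\<not> N dvd m" by (rule ndvd) (use m1 Nm in linarith)+
  hence "bet q k m \<noteq> 0" by (rule bet_nz[OF nk])
  have i': "0 < m" "m \<le> N-1" using m1 Nm by linarith+
  have h2: "ub N (-m+1) \<in> W" "ub N (m-1) \<in> W" using h by simp_all
  show ?thesis by (rule lin4(2)[OF W Npos BposW[OF i' h(1)] h2 z]) fact
qed

lemma pos_down: "m+2 \<le> i \<Longrightarrow> i \<le> N-1 \<Longrightarrow> ub N i \<in> W \<Longrightarrow> ub N (-i-1) \<in> W \<Longrightarrow> ub N (-i+1) \<in> W
   \<Longrightarrow> ub N (i+1) \<in> W \<Longrightarrow> ub N (i-1) \<in> W"
proof -
  assume i: "m+2 \<le> i" "i \<le> N-1" "ub N i \<in> W" and h: "ub N (-i-1) \<in> W" "ub N (-i+1) \<in> W" "ub N (i+1) \<in> W"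
  have "\<not> N dvd ((-i - m + N) - N)" by (rule ndvd') (use i Nm in linarith)+
  hence "\<not> N dvd (-i - k)" using dk by simp
  moreover have "\<not> N dvd (-i)" by (rule ndvd) (use i Nm in linarith)+
  moreover have "\<not> N dvd (-i+1)" by (rule ndvd) (use i Nm in linarith)+
  ultimately have "sc' q k (-i) \<noteq> 0" by (intro sc'_nz)
  have i': "0 < i" "i \<le> N-1" using i Nm by linarith+
  show ?thesis by (rule lin4(3)[OF W Npos BposW[OF i' i(3)] h]) fact
qed

lemma conn2: "ub N (m+1) \<in> W \<Longrightarrow> ub N (-m-2) \<in> W \<Longrightarrow> ub N (m+2) \<in> W \<Longrightarrow> ub N (-m) \<in> W"
proof -
  assume h: "ub N (m+1) \<in> W" "ub N (-m-2) \<in> W" "ub N (m+2) \<in> W"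
  have z: "sc' q k (-(m+1)) = 0"
  proof -
    have "-(m+1) - m = -N" using Nm by simp
    hence "N dvd (-(m+1) - m)" by simp
    hence "N dvd (-(m+1) - k)" using dk by blast
    thus ?thesis by (rule sc'0)
  qed
  have "\<not> N dvd (m+1)" by (rule ndvd) (use m1 Nm in linarith)+
  hence nz: "bet q k (m+1) \<noteq> 0" by (rule bet_nz[OF nk])
  have h2: "ub N (-(m+1)-1) \<in> W" "ub N ((m+1)+1) \<in> W" using h by (simp_all add: algebra_simps)
  have i': "0 < m+1" "m+1 \<le> N-1" using m1 Nm by linarith+
  have "ub N (-(m+1)+1) \<in> W"
    by (rule lin4(4)[OF W Npos BposW[OF i' h(1)] h2 z]) fact
  thus ?thesis by simp
qed

end
end


context irr begin
context fixes W assumes W: "invsub q k N W"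
begin

lemma chain1A: "int d \<le> m \<Longrightarrow> ub N (-int d) \<in> W \<Longrightarrow> ub N 0 \<in> W"
proof (induction d)
  case 0 thus ?case by simp
next
  case (Suc d)
  have "ub N (-int (Suc d) + 1) \<in> W" by (rule up1[OF W]) (use Suc.prems in auto)
  hence "ub N (-int d) \<in> W" by simp
  thus ?case using Suc by simp
qed

lemma chain1B: "ub N 0 \<in> W \<Longrightarrow> int d \<le> m \<Longrightarrow> ub N (-int d) \<in> W"
proof (induction d)
  case 0 thus ?case by simp
next
  case (Suc d)
  show ?case
  proof (cases "d = 0")
    case True thus ?thesis using zeroJ[OF W Suc.prems(1)] by simp
  next
    case False
    have "ub N (-int d - 1) \<in> W" by (rule down1[OF W]) (use Suc False in auto)
    moreover have e: "-int (Suc d) = -int d - 1" by simp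
    ultimately show ?thesis by (simp only: e)
  qed
qed

lemma chain1: "-m \<le> t \<Longrightarrow> t \<le> 0 \<Longrightarrow> ub N t \<in> W \<Longrightarrow> -m \<le> s \<Longrightarrow> s \<le> 0 \<Longrightarrow> ub N s \<in> W"
proof -
  assume h: "-m \<le> t" "t \<le> 0" "ub N t \<in> W" "-m \<le> s" "s \<le> 0"
  have "ub N 0 \<in> W" using chain1A[of "nat (-t)"] h by simp
  from chain1B[OF this, of "nat (-s)"] h show ?thesis by simp
qed

lemma chain2A: "-N + int d \<le> -m-1 \<Longrightarrow> ub N (-N + int d) \<in> W \<Longrightarrow> ub N (-N) \<in> W"
proof (induction d)
  case 0 thus ?case by simp
next
  case (Suc d)
  have "ub N (-N + int (Suc d) - 1) \<in> W" by (rule down2[OF W]) (use Suc.prems in auto)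
  hence "ub N (-N + int d) \<in> W" by simp
  thus ?case using Suc by simp
qed

lemma chain2B: "ub N (-N) \<in> W \<Longrightarrow> -N + int d \<le> -m-1 \<Longrightarrow> ub N (-N + int d) \<in> W"
proof (induction d)
  case 0 thus ?case by simp
next
  case (Suc d)
  show ?case
  proof (cases "d = 0")
    case True thus ?thesis using negNJ[OF W Suc.prems(1)] by simp
  next
    case False
    have "ub N (-N + int d + 1) \<in> W" by (rule up2[OF W]) (use Suc False in auto)
    thus ?thesis by (simp add: algebra_simps)
  qed
qed

lemma chain2: "-N \<le> t \<Longrightarrow> t \<le> -m-1 \<Longrightarrow> ub N t \<in> W \<Longrightarrow> -N \<le> s \<Longrightarrow> s \<le> -m-1 \<Longrightarrow> ub N s \<in> W"
proof -
  assume h: "-N \<le> t" "t \<le> -m-1" "ub N t \<in> W" "-N \<le> s" "s \<le> -m-1"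
  have "ub N (-N) \<in> W" using chain2A[of "nat (t+N)"] h by simp
  from chain2B[OF this, of "nat (s+N)"] h show ?thesis by simp
qed

lemma C1: "(\<forall>s. -m \<le> s \<and> s \<le> 0 \<longrightarrow> ub N s \<in> W) \<Longrightarrow> (\<forall>s. 1 \<le> s \<and> s \<le> m \<longrightarrow> ub N s \<in> W) \<and> ub N (-m-1) \<in> W"
proof -
  assume hyp: "\<forall>s. -m \<le> s \<and> s \<le> 0 \<longrightarrow> ub N s \<in> W"
  have aux: "1 \<le> int d \<Longrightarrow> int d \<le> m \<Longrightarrow> ub N (int d) \<in> W \<and> ub N (int d - 1) \<in> W" for d
  proof (induction d)
    case 0 thus ?case by simp
  next
    case (Suc d)
    show ?case
    proof (cases "d = 0")
      case True thus ?thesis using zeroJ[OF W] hyp m1 by simp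
    next
      case False
      hence IH: "ub N (int d) \<in> W" "ub N (int d - 1) \<in> W" using Suc by auto
      have "ub N (int d + 1) \<in> W"
        by (rule pos_up[OF W _ _ IH(1) _ _ IH(2)]) (use Suc.prems False hyp in auto)
      thus ?thesis using IH by (simp add: algebra_simps)
    qed
  qed
  have pos: "\<forall>s. 1 \<le> s \<and> s \<le> m \<longrightarrow> ub N s \<in> W"
  proof (intro allI impI)
    fix s :: int assume "1 \<le> s \<and> s \<le> m"
    thus "ub N s \<in> W" using aux[of "nat s"] by simp
  qed
  have a: "ub N m \<in> W" "ub N (m-1) \<in> W" using aux[of "nat m"] m1 by simp_all
  have "ub N (-m-1) \<in> W" by (rule conn1[OF W a(1) _ a(2)]) (use hyp m1 in auto)
  with pos show ?thesis by blast
qed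

lemma C2: "(\<forall>s. -N \<le> s \<and> s \<le> -m-1 \<longrightarrow> ub N s \<in> W) \<Longrightarrow> (\<forall>s. m+1 \<le> s \<and> s \<le> N-1 \<longrightarrow> ub N s \<in> W) \<and> ub N (-m) \<in> W"
proof -
  assume hyp: "\<forall>s. -N \<le> s \<and> s \<le> -m-1 \<longrightarrow> ub N s \<in> W"
  have b1: "ub N (N-1) \<in> W" using negNJ[OF W] hyp N2 Nm by simp
  have b2: "ub N N \<in> W" using W_zero[OF W] ubN by simp
  have aux: "m+1 \<le> N - 1 - int d \<Longrightarrow> ub N (N - 1 - int d) \<in> W \<and> ub N (N - int d) \<in> W" for d
  proof (induction d)
    case 0 thus ?case using b1 b2 by simp
  next
    case (Suc d)
    hence IH: "ub N (N - 1 - int d) \<in> W" "ub N (N - int d) \<in> W" by auto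
    have IH2: "ub N ((N - 1 - int d) + 1) \<in> W" using IH(2) by (simp add: algebra_simps)
    have "ub N ((N - 1 - int d) - 1) \<in> W"
      by (rule pos_down[OF W _ _ IH(1) _ _ IH2]) (use Suc.prems hyp Nm in auto)
    thus ?case using IH by (simp add: algebra_simps)
  qed
  have pos: "\<forall>s. m+1 \<le> s \<and> s \<le> N-1 \<longrightarrow> ub N s \<in> W"
  proof (intro allI impI)
    fix s :: int assume "m+1 \<le> s \<and> s \<le> N-1"
    thus "ub N s \<in> W" using aux[of "nat (N-1-s)"] by simp
  qed
  have a: "ub N (m+1) \<in> W" "ub N (m+2) \<in> W" using aux[of "nat (N-2-m)"] m1 Nm by (simp_all add: algebra_simps)
  have "ub N (-m) \<in> W" by (rule conn2[OF W a(1) _ a(2)]) (use hyp m1 Nm in auto)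
  with pos show ?thesis by blast
qed

lemma irr_main: "W \<noteq> {\<lambda>_. 0} \<Longrightarrow> W = Vsp N"
proof -
  assume ne: "W \<noteq> {\<lambda>_. 0}"
  obtain v where v: "v \<in> W" "v \<noteq> (\<lambda>_. 0)" using ne W_zero[OF W] by blast
  obtain v' where v': "v' \<in> W" "v' \<noteq> (\<lambda>_. 0)" "\<forall>j>0. v' j = 0"
    using phaseA[OF W lam_dist_pos v] by blast
  obtain t where t: "-N \<le> t" "t \<le> 0" "ub N t \<in> W"
    using phaseB[OF W lam_dist_neg v'] by blast
  have all: "(\<forall>s. -m \<le> s \<and> s \<le> 0 \<longrightarrow> ub N s \<in> W) \<and> (\<forall>s. -N \<le> s \<and> s \<le> -m-1 \<longrightarrow> ub N s \<in> W)"
  proof (cases "-m \<le> t")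
    case True
    have c1: "\<forall>s. -m \<le> s \<and> s \<le> 0 \<longrightarrow> ub N s \<in> W" using chain1[OF True t(2,3)] by blast
    have "ub N (-m-1) \<in> W" using C1[OF c1] by blast
    hence "\<forall>s. -N \<le> s \<and> s \<le> -m-1 \<longrightarrow> ub N s \<in> W" using chain2[of "-m-1"] Nm m1 by auto
    with c1 show ?thesis by blast
  next
    case False
    have c2: "\<forall>s. -N \<le> s \<and> s \<le> -m-1 \<longrightarrow> ub N s \<in> W" using chain2[OF t(1) _ t(3)] False by auto
    have "ub N (-m) \<in> W" using C2[OF c2] by blast
    hence "\<forall>s. -m \<le> s \<and> s \<le> 0 \<longrightarrow> ub N s \<in> W" using chain1[of "-m"] m1 by auto
    with c2 show ?thesis by blast
  qed
  have p1: "\<forall>s. 1 \<le> s \<and> s \<le> m \<longrightarrow> ub N s \<in> W" using C1 all by blast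
  have p2: "\<forall>s. m+1 \<le> s \<and> s \<le> N-1 \<longrightarrow> ub N s \<in> W" using C2 all by blast
  show ?thesis
  proof (rule W_full[OF W], intro allI impI)
    fix i assume "-N \<le> i \<and> i \<le> N-1"
    thus "ub N i \<in> W" using all p1 p2 by (cases "i \<le> -m-1"; cases "i \<le> 0"; cases "i \<le> m") auto
  qed
qed

end
end


theorem mainTheorem14:
  fixes q :: complex and k :: int
  assumes "\<exists>m::nat. m > 0 \<and> q ^ m = 1"
    and "even (ordq2 q)"
    and "q ^ 4 \<noteq> 1"
  shows "reducible_rep q k (int (ordq2 q div 2)) \<longleftrightarrow>
         - qp q (4*k + 2) - qp q (-4*k - 2) \<noteq> 2"
proof -
  define n where "n = ordq2 q"
  define N where "N = int (ordq2 q div 2)"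
  obtain m0 :: nat where m0: "m0 > 0" "q ^ m0 = 1" using assms(1) by blast
  have q0: "q \<noteq> 0" using m0 by (metis power_0_left zero_neq_one not_gr0)
  have ex: "m0 > 0 \<and> (q^2)^m0 = 1" using m0 by (simp add: power_mult_distrib flip: power_mult) (metis power_mult power_one mult.commute)
  have nP: "n > 0 \<and> (q^2)^n = 1" unfolding n_def ordq2_def by (rule LeastI[of _ m0]) (rule ex)
  have nL: "\<And>m. 0 < m \<Longrightarrow> (q^2)^m = 1 \<Longrightarrow> n \<le> m" unfolding n_def ordq2_def by (rule Least_le) simp
  have keyn: "(q^2) powi a = 1 \<longleftrightarrow> int n dvd a" for a
    by (rule powi_eq1_iff) (use nP nL in auto)
  have nN: "int n = 2*N" using assms(2) unfolding N_def n_def by auto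
  have n2: "n \<noteq> 2" using nL[of 2] assms(3) nP by (metis power_mult numeral_times_numeral semiring_norm(12)
        semiring_norm(13) mult_2 numeral_Bit0)
  have N2: "N \<ge> 2" using nN nP n2 assms(2) unfolding n_def by (auto simp: N_def)
  have key: "qp q (2*a) = 1 \<longleftrightarrow> 2*N dvd a" for a
    using keyn[of a] nN by (simp add: qp_def power_int_power)
  interpret rs q k N by unfold_locales (use q0 key N2 in auto)
  have weq: "- qp q (4*k + 2) - qp q (-4*k - 2) = 2 \<longleftrightarrow> N dvd (2*k+1)"
  proof -
    define x where "x = qp q (4*k+2)"
    have xy: "qp q (-4*k - 2) * x = 1" using qp_neg[of "4*k+2"] unfolding x_def by simp
    have xx: "x * x = 1 \<longleftrightarrow> 2*N dvd (2*(2*k+1))"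
    proof -
      have e: "x * x = qp q (2*(2*(2*k+1)))" unfolding x_def using qp_add[of "4*k+2" "4*k+2"] by (simp add: algebra_simps)
      show ?thesis unfolding e by (rule key)
    qed
    have g1: "\<And>a. 2*N dvd 2*a \<Longrightarrow> N dvd a" by simp
    have g2: "\<And>a. N dvd a \<Longrightarrow> 2*N dvd 2*a" by simp
    have "- qp q (4*k + 2) - qp q (-4*k - 2) = 2 \<longleftrightarrow> x = -1"
    proof
      assume h: "- qp q (4*k + 2) - qp q (-4*k - 2) = 2"
      have "qp q (-4*k - 2) = (- qp q (4*k + 2)) - (- qp q (4*k + 2) - qp q (-4*k - 2))" by simp
      hence "qp q (-4*k - 2) = (- qp q (4*k + 2)) - 2" unfolding h .
      hence e1: "qp q (-4*k - 2) = - x - 2" unfolding x_def .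
      have "(- x - 2) * x = 1" using xy unfolding e1 .
      hence "(x + 1) * (x + 1) = 0" by algebra
      hence "x + 1 = 0" by simp
      thus "x = -1" by algebra
    next
      assume "x = -1"
      hence "qp q (-4*k - 2) = -1" using xy by algebra
      thus "- qp q (4*k + 2) - qp q (-4*k - 2) = 2" using \<open>x = -1\<close> unfolding x_def by simp
    qed
    also have "x = -1 \<longleftrightarrow> N dvd (2*k+1)"
    proof
      assume "x = -1"
      hence "x * x = 1" by simp
      hence "2*N dvd 2*(2*k+1)" using xx by blast
      thus "N dvd (2*k+1)" using g1 by blast
    next
      assume "N dvd (2*k+1)"
      hence "2*N dvd 2*(2*k+1)" using g2 by blast
      hence "x * x = 1" using xx by blast
      hence "(x - 1) * (x + 1) = 0" by algebra
      moreover have "x \<noteq> 1"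
      proof
        assume "x = 1"
        hence "2*N dvd (2*k+1)" using key[of "2*k+1"] unfolding x_def by (simp add: algebra_simps)
        hence "2 dvd (2*k+1)" by (metis dvd_mult_left)
        thus False by simp
      qed
      ultimately have "x + 1 = 0" by simp
      thus "x = -1" by algebra
    qed
    finally show ?thesis .
  qed
  have "reducible_rep q k N \<longleftrightarrow> \<not> N dvd (2*k+1)"
  proof (cases "N dvd (2*k+1)")
    case True
    have oddN: "odd N"
    proof
      assume "even N"
      hence "2 dvd 2*k+1" using True dvd_trans by blast
      thus False by simp
    qed
    define m where "m = N div 2"
    have Nm: "N = 2*m+1" using oddN unfolding m_def by presburger
    have e: "2*(k - m) = (2*k+1) - N" using Nm by simp
    have "N dvd (2*k+1) - N" by (rule dvd_diff[OF True dvd_refl])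
    hence "N dvd 2*(k - m)" unfolding e .
    hence "N dvd 2*(k-m)*(m+1)" by simp
    moreover have "2*(k-m)*(m+1) = (k-m)*N + (k-m)" using Nm by (simp add: algebra_simps)
    ultimately have "N dvd (k-m)*N + (k-m)" by simp
    hence km: "N dvd (k - m)" by (simp add: dvd_add_right_iff)
    interpret irr q k N m by unfold_locales (use Nm km in auto)
    have "\<not> reducible_rep q k N"
    proof
      assume "reducible_rep q k N"
      then obtain W where W: "csubspace_of N W" "W \<noteq> {\<lambda>_. 0}" "W \<noteq> Vsp N"
        "\<forall>v\<in>W. rho0 q N v \<in> W \<and> rhoInf q k N v \<in> W" unfolding reducible_rep_def by blast
      have "invsub q k N W" unfolding invsub_def using W by blast
      from irr_main[OF this W(2)] W(3) show False by blast
    qed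
    thus ?thesis using True by blast
  next
    case False
    define m where "m = k mod N"
    have m1: "0 \<le> m" "m < N" using N2 unfolding m_def by simp_all
    have "k - m = N * (k div N)" unfolding m_def by (simp add: minus_mod_eq_mult_div)
    hence m3: "N dvd (k - m)" by simp
    have m: "0 \<le> m" "m \<le> N - 1" "N dvd (k - m)" using m1 m3 by auto
    consider "2*m+2 \<le> N" | "N \<le> 2*m" | "N = 2*m+1" by linarith
    hence "reducible_rep q k N"
    proof cases
      case 1 thus ?thesis using red1 m by blast
    next
      case 2 thus ?thesis using red2 m by blast
    next
      case 3
      have e: "2*k+1 = 2*(k-m) + N" using 3 by simp
      have "N dvd 2*(k-m) + N" using m(3) by (intro dvd_add dvd_mult dvd_refl)
      hence "N dvd 2*k+1" unfolding e .
      thus ?thesis using False by simp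
    qed
    thus ?thesis using False by blast
  qed
  thus ?thesis using weq unfolding N_def by blast
qed


end
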